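(* In the setting described in the context, set $P_0=S_{\infty 0}S_{\infty 0}^*$ and $P_n=W_\infty^nP_0W_\infty^{*n}$ for $n\in\mathbb Z$. Then (1) $\{P_n:n\in\mathbb Z\}$ is a decreasing family of projections in $\mathcal B(\mathcal H_\infty)$; (2) the strong operator limit $P_{+\infty}:=\lim_{n\to+\infty}P_n$ exists; (3) $\lim_{n\to-\infty}P_n=1$ in the strong operator topology; (4) $\{P_n:n\in\mathbb Z\cup\{+\infty\}\}\subset\pi_\infty(\mathcal A_\infty)'$.
   Context: $\mathcal A$ is a unital C*-algebra, $\alpha$ an injective unital $*$-endomorphism; $\mathcal A_\infty$ is the C*-inductive limit of $\mathcal A\xrightarrow{\alpha}\mathcal A\xrightarrow{\alpha}\cdots$ with canonical maps $\varphi_{\infty n}$ ($\varphi_{\infty,n+1}\circ\alpha=\varphi_{\infty n}$), and $\alpha_\infty$ the automorphism with $\alpha_\infty(\varphi_{\infty n}(a))=\varphi_{\infty n}(\alpha(a))$. $(\mathcal H,\pi,W)$ is a covariant representation of $(\mathcal A,\alpha)$: $\pi$ a representation, $W$ an isometry, $\pi(\alpha(a))W=W\pi(a)$, $W^kW^{*k}\in\pi(\mathcal A)'$ for all $k\in\mathbb N$. $\mathcal H_\infty$ is the Hilbert space inductive limit of $\mathcal H\xrightarrow{W}\mathcal H\xrightarrow{W}\cdots$: isometries $S_{\infty n}:\mathcal H\to\mathcal H_\infty$ ($n\ge0$) with $S_{\infty,n+1}W=S_{\infty n}$ and $\bigcup_nS_{\infty n}\mathcal H$ dense. $W_\infty$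 is the unitary on $\mathcal H_\infty$ determined by $W_\infty S_{\infty n}=S_{\infty,n-1}$ for $n\ge1$ (hence $W_\infty S_{\infty 0}=S_{\infty 0}W$), and $\pi_\infty$ is the representation of $\mathcal A_\infty$ on $\mathcal H_\infty$ determined by $\pi_\infty(\varphi_{\infty n}(a))S_{\infty n}=S_{\infty n}\pi(a)$ for all $n\ge0$, $a\in\mathcal A$; it satisfies $\pi_\infty(\alpha_\infty(x))=W_\infty\pi_\infty(x)W_\infty^*$. *)

theory Defs
  imports "HOL-Analysis.Analysis"
begin

class cvector = real_vector +
  fixes scaleC :: "complex \<Rightarrow> 'a \<Rightarrow> 'a" (infixr \<open>*\<^sub>C\<close> 75)
  assumes scaleC_add_right: "a *\<^sub>C (x + y) = a *\<^sub>C x + a *\<^sub>C y"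
    and scaleC_add_left: "(a + b) *\<^sub>C x = a *\<^sub>C x + b *\<^sub>C x"
    and scaleC_scaleC: "a *\<^sub>C (b *\<^sub>C x) = (a * b) *\<^sub>C x"
    and scaleC_one: "1 *\<^sub>C x = x"
    and scaleR_scaleC: "scaleR r x = complex_of_real r *\<^sub>C x"

class cnormed = cvector + real_normed_vector +
  assumes norm_scaleC: "norm (a *\<^sub>C x) = cmod a * norm x"

class chilbert = cnormed + banach +
  fixes cinner :: "'a \<Rightarrow> 'a \<Rightarrow> complex"
  assumes cinner_add_left: "cinner (x + y) z = cinner x z + cinner y z"
    and cinner_scaleC_left: "cinner (a *\<^sub>C x) y = a * cinner x y"
    and cinner_commute: "cinner y x = cnj (cinner x y)"
    and cinner_self: "cinner x x = complex_of_real ((norm x)\<^sup>2)"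

class cstar_algebra = cnormed + banach + real_normed_algebra_1 +
  fixes invol :: "'a \<Rightarrow> 'a"
  assumes invol_invol: "invol (invol x) = x"
    and invol_add: "invol (x + y) = invol x + invol y"
    and invol_scaleC: "invol (a *\<^sub>C x) = cnj a *\<^sub>C invol x"
    and invol_mult: "invol (x * y) = invol y * invol x"
    and mult_scaleC_left: "(a *\<^sub>C x) * y = a *\<^sub>C (x * y)"
    and mult_scaleC_right: "x * (a *\<^sub>C y) = a *\<^sub>C (x * y)"
    and cstar_identity: "norm (invol x * x) = (norm x)\<^sup>2"

definition clinear :: "('a::cvector \<Rightarrow> 'b::cvector) \<Rightarrow> bool" where
  "clinear f \<longleftrightarrow> (\<forall>x y. f (x + y) = f x + f y) \<and> (\<forall>a x. f (a *\<^sub>C x) = a *\<^sub>C f x)"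

definition cbounded :: "('a::cnormed \<Rightarrow> 'b::cnormed) \<Rightarrow> bool" where
  "cbounded f \<longleftrightarrow> clinear f \<and> (\<exists>K. \<forall>x. norm (f x) \<le> norm x * K)"

definition cadj :: "('a::chilbert \<Rightarrow> 'b::chilbert) \<Rightarrow> 'b \<Rightarrow> 'a" where
  "cadj T = (SOME T'. \<forall>x y. cinner (T x) y = cinner x (T' y))"

definition isometry :: "('a::chilbert \<Rightarrow> 'b::chilbert) \<Rightarrow> bool" where
  "isometry T \<longleftrightarrow> cbounded T \<and> (\<forall>x. norm (T x) = norm x)"

definition unitary :: "('a::chilbert \<Rightarrow> 'a) \<Rightarrow> bool" where
  "unitary U \<longleftrightarrow> cbounded U \<and> cadj U \<circ> U = id \<and> U \<circ> cadj U = id"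

definition is_projection :: "('a::chilbert \<Rightarrow> 'a) \<Rightarrow> bool" where
  "is_projection P \<longleftrightarrow> cbounded P \<and> P \<circ> P = P \<and> cadj P = P"

text \<open>Operator order: \<open>A \<le> B\<close> iff \<open>\<langle>(B - A)x, x\<rangle> \<ge> 0\<close> for all x.\<close>
definition op_le :: "('a::chilbert \<Rightarrow> 'a) \<Rightarrow> ('a \<Rightarrow> 'a) \<Rightarrow> bool" where
  "op_le A B \<longleftrightarrow> (\<forall>x. Im (cinner (A x) x) = Im (cinner (B x) x)
                      \<and> Re (cinner (A x) x) \<le> Re (cinner (B x) x))"

definition commutant :: "('a::chilbert \<Rightarrow> 'a) set \<Rightarrow> ('a \<Rightarrow> 'a) set" where
  "commutant M = {T. cbounded T \<and> (\<forall>A\<in>M. T \<circ> A = A \<circ> T)}"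

definition upow :: "('a::chilbert \<Rightarrow> 'a) \<Rightarrow> int \<Rightarrow> 'a \<Rightarrow> 'a" where
  "upow U n = (if 0 \<le> n then U ^^ nat n else cadj U ^^ nat (- n))"

definition unital_star_hom :: "('a::cstar_algebra \<Rightarrow> 'b::cstar_algebra) \<Rightarrow> bool" where
  "unital_star_hom f \<longleftrightarrow> clinear f \<and> (\<forall>x y. f (x * y) = f x * f y)
     \<and> (\<forall>x. f (invol x) = invol (f x)) \<and> f 1 = 1"

text \<open>A (bounded) *-representation of a C*-algebra on a Hilbert space.  Contractivity
  is automatic for *-homomorphisms of C*-algebras and is recorded explicitly.\<close>
definition representation :: "('a::cstar_algebra \<Rightarrow> 'h::chilbert \<Rightarrow> 'h) \<Rightarrow> bool" where
  "representation \<pi> \<longleftrightarrow>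
     (\<forall>a. cbounded (\<pi> a)) \<and>
     (\<forall>a v. norm (\<pi> a v) \<le> norm a * norm v) \<and>
     (\<forall>a b. \<pi> (a + b) = (\<lambda>v. \<pi> a v + \<pi> b v)) \<and>
     (\<forall>c a. \<pi> (c *\<^sub>C a) = (\<lambda>v. c *\<^sub>C \<pi> a v)) \<and>
     (\<forall>a b. \<pi> (a * b) = \<pi> a \<circ> \<pi> b) \<and>
     (\<forall>a. \<pi> (invol a) = cadj (\<pi> a))"

end

theory Submission
  imports Defs
begin


lemma scaleC_real: "complex_of_real r *\<^sub>C (x::'a::cvector) = r *\<^sub>R x"
  by (simp add: scaleR_scaleC)

lemma scaleC_zero_left [simp]: "0 *\<^sub>C (x::'a::cvector) = 0"
  using scaleC_real[of 0 x] by simp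

lemma scaleC_minus1: "(-1) *\<^sub>C (x::'a::cvector) = - x"
  using scaleC_real[of "-1" x] by simp

lemma scaleC_zero_right [simp]: "c *\<^sub>C (0::'a::cvector) = 0"
proof -
  have "c *\<^sub>C (0::'a) + c *\<^sub>C 0 = c *\<^sub>C 0" by (simp only: scaleC_add_right[symmetric] add_0_right)
  then show ?thesis by (simp only: add_cancel_left_right)
qed

lemma scaleC_minus_right: "c *\<^sub>C (- x::'a::cvector) = - (c *\<^sub>C x)"
proof -
  have "c *\<^sub>C (- x) + c *\<^sub>C x = 0" by (simp only: scaleC_add_right[symmetric] left_minus scaleC_zero_right)
  then show ?thesis by (simp add: eq_neg_iff_add_eq_0)
qed

lemma scaleC_diff_right: "c *\<^sub>C (x - y::'a::cvector) = c *\<^sub>C x - c *\<^sub>C y"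
  by (simp only: diff_conv_add_uminus scaleC_add_right scaleC_minus_right)

lemma scaleC_minus_left: "(- c) *\<^sub>C (x::'a::cvector) = - (c *\<^sub>C x)"
proof -
  have "(- c) *\<^sub>C x = (-1) *\<^sub>C (c *\<^sub>C x)" by (simp only: scaleC_scaleC) simp
  then show ?thesis by (simp only: scaleC_minus1)
qed

lemma scaleC_diff_left: "(c - d) *\<^sub>C (x::'a::cvector) = c *\<^sub>C x - d *\<^sub>C x"
  by (simp only: diff_conv_add_uminus scaleC_add_left scaleC_minus_left)

lemma bounded_linear_scaleC: "bounded_linear (\<lambda>x::'a::cnormed. c *\<^sub>C x)"
proof (rule bounded_linear_intro[where K="cmod c"])
  show "c *\<^sub>C (x + y) = c *\<^sub>C x + c *\<^sub>C y" for x y :: 'a by (rule scaleC_add_right)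
  show "c *\<^sub>C r *\<^sub>R x = r *\<^sub>R (c *\<^sub>C x)" for r and x :: 'a
    by (simp only: scaleR_scaleC scaleC_scaleC mult.commute)
  show "norm (c *\<^sub>C x) \<le> norm x * cmod c" for x :: 'a by (simp only: norm_scaleC mult.commute order_refl)
qed

lemma cnj_cinner [simp]: "cnj (cinner x (y::'a::chilbert)) = cinner y x"
proof -
  have "cinner y x = cnj (cinner x y)" by (rule cinner_commute)
  then show ?thesis by simp
qed

lemma cinner_add_right: "cinner (x::'a::chilbert) (y + z) = cinner x y + cinner x z"
proof -
  have "cinner x (y+z) = cnj (cinner (y+z) x)" by simp
  also have "\<dots> = cnj (cinner y x + cinner z x)" by (simp only: cinner_add_left)
  also have "\<dots> = cinner x y + cinner x z" by simp
  finally show ?thesis .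
qed

lemma cinner_scaleC_right: "cinner (x::'a::chilbert) (c *\<^sub>C y) = cnj c * cinner x y"
proof -
  have "cinner x (c *\<^sub>C y) = cnj (cinner (c *\<^sub>C y) x)" by simp
  also have "\<dots> = cnj (c * cinner y x)" by (simp only: cinner_scaleC_left)
  also have "\<dots> = cnj c * cinner x y" by simp
  finally show ?thesis .
qed

lemma cinner_zero_left [simp]: "cinner 0 (y::'a::chilbert) = 0"
  using cinner_scaleC_left[of 0 0 y] by simp

lemma cinner_zero_right [simp]: "cinner (x::'a::chilbert) 0 = 0"
  using cinner_scaleC_right[of x 0 0] by simp

lemma cinner_minus_left: "cinner (- x) (y::'a::chilbert) = - cinner x y"
  using cinner_scaleC_left[of "-1" x y] by (simp add: scaleC_minus1)

lemma cinner_minus_right: "cinner x (- y::'a::chilbert) = - cinner x y"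
  using cinner_scaleC_right[of x "-1" y] by (simp add: scaleC_minus1)

lemma cinner_diff_left: "cinner (x - z) (y::'a::chilbert) = cinner x y - cinner z y"
  by (simp only: diff_conv_add_uminus cinner_add_left cinner_minus_left)

lemma cinner_diff_right: "cinner x (y - z::'a::chilbert) = cinner x y - cinner x z"
  by (simp only: diff_conv_add_uminus cinner_add_right cinner_minus_right)

lemma cinner_scaleR_left: "cinner (r *\<^sub>R x) (y::'a::chilbert) = complex_of_real r * cinner x y"
  by (simp add: scaleR_scaleC cinner_scaleC_left)

lemma norm_sq_cinner: "(norm (x::'a::chilbert))\<^sup>2 = Re (cinner x x)"
  by (simp add: cinner_self)

lemma cinner_self_eq_0: "cinner x x = 0 \<longleftrightarrow> (x::'a::chilbert) = 0"
  by (simp add: cinner_self)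

lemma cinner_ext: assumes "\<And>x. cinner x a = cinner x (b::'a::chilbert)" shows "a = b"
proof -
  have "cinner (a - b) (a - b) = 0" using assms by (simp add: cinner_diff_right)
  then show ?thesis by (simp add: cinner_self_eq_0)
qed

lemma cinner_ext_left: assumes "\<And>y. cinner a y = cinner (b::'a::chilbert) y" shows "a = b"
proof (rule cinner_ext)
  fix x show "cinner x a = cinner x b" using assms[of x] cnj_cinner[of a x] cnj_cinner[of b x] by simp
qed

lemma Re_cinner_commute: "Re (cinner y x) = Re (cinner x (y::'a::chilbert))"
proof -
  have "Re (cnj (cinner x y)) = Re (cinner x y)" by (simp del: cnj_cinner)
  then show ?thesis by (simp only: cnj_cinner)
qed

lemma norm_add_sq: "(norm (x + y))\<^sup>2 = (norm x)\<^sup>2 + (norm y)\<^sup>2 + 2 * Re (cinner x (y::'a::chilbert))"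
  by (simp add: norm_sq_cinner cinner_add_left cinner_add_right Re_cinner_commute[of x y])

lemma norm_diff_sq: "(norm (x - y))\<^sup>2 = (norm x)\<^sup>2 + (norm y)\<^sup>2 - 2 * Re (cinner x (y::'a::chilbert))"
  by (simp add: norm_sq_cinner cinner_diff_left cinner_diff_right Re_cinner_commute[of x y])

lemma cauchy_schwarz: "cmod (cinner x y) \<le> norm x * norm (y::'a::chilbert)"
proof (cases "y = 0")
  case True then show ?thesis by simp
next
  case False
  define ny where "ny = (norm y)\<^sup>2"
  have ny: "ny > 0" using False by (simp add: ny_def)
  define c where "c = cinner x y"
  define t where "t = c / complex_of_real ny"
  have 1: "cnj t * c = complex_of_real ((cmod c)\<^sup>2 / ny)"
  proof -
    have "cnj c * c = complex_of_real ((cmod c)\<^sup>2)"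
      by (metis complex_norm_square mult.commute of_real_power)
    then show ?thesis by (simp add: t_def)
  qed
  have 2: "(norm (t *\<^sub>C y))\<^sup>2 = (cmod c)\<^sup>2 / ny"
  proof -
    have tn: "cmod t = cmod c / ny" using ny by (simp add: t_def norm_divide)
    have "(norm (t *\<^sub>C y))\<^sup>2 = (cmod c / ny)\<^sup>2 * ny"
      using ny by (simp add: norm_scaleC tn ny_def power2_eq_square field_simps)
    then show ?thesis using ny by (simp add: power2_eq_square field_simps)
  qed
  have 3: "Re (cinner x (t *\<^sub>C y)) = (cmod c)\<^sup>2 / ny"
  proof -
    have "cinner x (t *\<^sub>C y) = cnj t * c" unfolding c_def by (rule cinner_scaleC_right)
    then show ?thesis using 1 by simp
  qed
  have "0 \<le> (norm (x - t *\<^sub>C y))\<^sup>2" by simp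
  also have "\<dots> = (norm x)\<^sup>2 + (cmod c)\<^sup>2 / ny - 2 * ((cmod c)\<^sup>2 / ny)"
    unfolding norm_diff_sq 2 3 ..
  finally have "(cmod c)\<^sup>2 / ny \<le> (norm x)\<^sup>2" by simp
  then have "(cmod c)\<^sup>2 \<le> (norm x)\<^sup>2 * ny" using ny by (simp add: divide_le_eq)
  also have "\<dots> = (norm x * norm y)\<^sup>2" by (simp add: ny_def power_mult_distrib)
  finally show ?thesis unfolding c_def
    by (rule power2_le_imp_le) simp
qed

lemma riesz:
  fixes f :: "'a::chilbert \<Rightarrow> complex"
  assumes add: "\<And>x y. f (x + y) = f x + f y"
    and sc: "\<And>c x. f (c *\<^sub>C x) = c * f x"
    and bnd: "\<And>x. cmod (f x) \<le> norm x * K"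
  shows "\<exists>z. \<forall>x. f x = cinner x z"
proof (cases "\<forall>x. f x = 0")
  case True then show ?thesis by (intro exI[of _ 0]) simp
next
  case False
  then obtain z0 where z0: "f z0 \<noteq> 0" by auto
  have fR: "f (r *\<^sub>R x) = complex_of_real r * f x" for r x
    by (simp add: scaleR_scaleC sc)
  have f0: "f 0 = 0" using sc[of 0 0] by simp
  have fdiff: "f (x - y) = f x - f y" for x y
    using add[of "x - y" y] by (simp add: eq_diff_eq)
  have blf: "bounded_linear f"
  proof (rule bounded_linear_intro[where K=K])
    show "f (x + y) = f x + f y" for x y by (rule add)
    show "f (r *\<^sub>R x) = r *\<^sub>R f x" for r x by (simp add: fR scaleR_conv_of_real)
    show "norm (f x) \<le> norm x * K" for x using bnd by simp
  qed
  define C where "C = {v. f v = 1}"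
  have Cne: "(1 / f z0) *\<^sub>C z0 \<in> C" using z0 by (simp add: C_def sc)
  define d where "d = Inf (norm ` C)"
  have bdd: "bdd_below (norm ` C)" by (rule bdd_belowI[of _ 0]) auto
  have dle: "d \<le> norm v" if "v \<in> C" for v
    unfolding d_def using bdd that by (simp add: cInf_lower)
  have d0: "0 \<le> d" unfolding d_def using Cne by (intro cInf_greatest) auto
  have "\<exists>v\<in>C. norm v < d + inverse (real (Suc k))" for k
  proof -
    have "Inf (norm ` C) < d + inverse (real (Suc k))" unfolding d_def by simp
    then obtain r where "r \<in> norm ` C" "r < d + inverse (real (Suc k))"
      using cInf_lessD[of "norm ` C"] Cne by blast
    then show ?thesis by auto
  qed
  then have "\<forall>k. \<exists>v. v \<in> C \<and> norm v < d + inverse (real (Suc k))" by blast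
  from choice[OF this] obtain v where vv: "\<forall>k. v k \<in> C \<and> norm (v k) < d + inverse (real (Suc k))"
    by blast
  have v: "\<And>k. v k \<in> C" "\<And>k. norm (v k) < d + inverse (real (Suc k))" using vv by auto
  have fv: "f (v k) = 1" for k using v(1) by (simp add: C_def)
  have par: "(norm (a + b))\<^sup>2 + (norm (a - b))\<^sup>2 = 2 * (norm a)\<^sup>2 + 2 * (norm b)\<^sup>2" for a b :: 'a
    by (simp add: norm_add_sq norm_diff_sq)
  define g where "g k = 2 * ((d + inverse (real (Suc k)))\<^sup>2 - d\<^sup>2)" for k
  have vsq: "(norm (v k))\<^sup>2 \<le> (d + inverse (real (Suc k)))\<^sup>2" for k
    using v(2)[of k] by (intro power_mono) auto
  have gb: "(norm (v i - v j))\<^sup>2 \<le> g i + g j" for i j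
  proof -
    have "(1/2) *\<^sub>R (v i + v j) \<in> C"
      using fv by (simp add: C_def fR add)
    then have "d \<le> norm ((1/2) *\<^sub>R (v i + v j))" by (rule dle)
    then have "2 * d \<le> norm (v i + v j)" by simp
    then have "(2 * d)\<^sup>2 \<le> (norm (v i + v j))\<^sup>2" using d0 by (intro power_mono) auto
    moreover have "(2 * d)\<^sup>2 = 4 * d\<^sup>2" by (simp add: power_mult_distrib)
    ultimately show ?thesis using par[of "v i" "v j"] vsq[of i] vsq[of j]
      unfolding g_def by argo
  qed
  have inv0: "(\<lambda>k. inverse (real (Suc k))) \<longlonglongrightarrow> 0"
    by (rule LIMSEQ_inverse_real_of_nat)
  have glim: "g \<longlonglongrightarrow> 0"
  proof -
    have "(\<lambda>k. 2 * ((d + inverse (real (Suc k)))\<^sup>2 - d\<^sup>2)) \<longlonglongrightarrow> 2 * ((d + 0)\<^sup>2 - d\<^sup>2)"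
      by (intro tendsto_intros inv0)
    then show ?thesis by (simp add: g_def[abs_def])
  qed
  have "Cauchy v"
  proof (rule metric_CauchyI)
    fix e :: real assume e: "0 < e"
    then have "eventually (\<lambda>k. g k < e\<^sup>2 / 2) sequentially"
      using glim by (intro order_tendstoD(2)) auto
    then obtain M where M: "\<And>k. k \<ge> M \<Longrightarrow> g k < e\<^sup>2 / 2"
      unfolding eventually_sequentially by auto
    have "dist (v m) (v n) < e" if "m \<ge> M" "n \<ge> M" for m n
    proof -
      have "(norm (v m - v n))\<^sup>2 < e\<^sup>2" using gb[of m n] M[OF that(1)] M[OF that(2)] by simp
      then have "norm (v m - v n) < e" by (rule power2_less_imp_less[OF _ less_imp_le[OF e]])
      then show ?thesis by (simp add: dist_norm)
    qed
    then show "\<exists>M. \<forall>m\<ge>M. \<forall>n\<ge>M. dist (v m) (v n) < e" by blast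
  qed
  then obtain w where w: "v \<longlonglongrightarrow> w"
    using Cauchy_convergent convergent_def by blast
  have fw: "f w = 1"
  proof -
    have "(\<lambda>k. f (v k)) \<longlonglongrightarrow> f w" using w by (rule bounded_linear.tendsto[OF blf])
    then have "(\<lambda>k. 1) \<longlonglongrightarrow> f w" using fv by simp
    then have "1 = f w" by (rule LIMSEQ_const_iff[THEN iffD1])
    then show ?thesis by simp
  qed
  have nw: "norm w \<le> d"
  proof (rule tendsto_le[OF trivial_limit_sequentially])
    show "(\<lambda>k. d + inverse (real (Suc k))) \<longlonglongrightarrow> d" using tendsto_add[OF tendsto_const inv0] by simp
    show "(\<lambda>k. norm (v k)) \<longlonglongrightarrow> norm w" using w by (rule tendsto_norm)
    show "\<forall>\<^sub>F k in sequentially. norm (v k) \<le> d + inverse (real (Suc k))"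
      using v(2) by (simp add: less_imp_le)
  qed
  have orth: "cinner w y = 0" if fy: "f y = 0" for y
  proof (rule ccontr)
    define c where "c = cinner w y"
    assume "cinner w y \<noteq> 0"
    then have cpos: "(cmod c)\<^sup>2 > 0" by (simp add: c_def)
    define q where "q = (norm y)\<^sup>2"
    have q0: "q \<ge> 0" by (simp add: q_def)
    define s where "s = 1 / (q + 1)"
    have s0: "s > 0" using q0 by (simp add: s_def)
    have sq: "s * q < 1" using q0 by (simp add: s_def)
    define t where "t = - (complex_of_real s * c)"
    have "w + t *\<^sub>C y \<in> C" using fw fy by (simp add: C_def add sc)
    then have "d \<le> norm (w + t *\<^sub>C y)" by (rule dle)
    then have "norm w \<le> norm (w + t *\<^sub>C y)" using nw by simp
    then have A: "(norm w)\<^sup>2 \<le> (norm (w + t *\<^sub>C y))\<^sup>2" by (intro power_mono) auto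
    have cc: "cnj c * c = complex_of_real ((cmod c)\<^sup>2)"
      by (metis complex_norm_square mult.commute of_real_power)
    have B: "Re (cinner w (t *\<^sub>C y)) = - s * (cmod c)\<^sup>2"
    proof -
      have "cinner w (t *\<^sub>C y) = cnj t * c" unfolding c_def by (rule cinner_scaleC_right)
      also have "\<dots> = - (complex_of_real s * (cnj c * c))" by (simp add: t_def)
      also have "\<dots> = complex_of_real (- s * (cmod c)\<^sup>2)" by (simp add: cc)
      finally show ?thesis by simp
    qed
    have Cn: "(norm (t *\<^sub>C y))\<^sup>2 = s\<^sup>2 * (cmod c)\<^sup>2 * q"
      using s0 by (simp add: norm_scaleC t_def norm_mult q_def power_mult_distrib)
    have "(norm w)\<^sup>2 \<le> (norm w)\<^sup>2 + s\<^sup>2 * (cmod c)\<^sup>2 * q + 2 * (- s * (cmod c)\<^sup>2)"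
      using A by (simp only: norm_add_sq B Cn)
    moreover have "s\<^sup>2 * (cmod c)\<^sup>2 * q = s * (s * q * (cmod c)\<^sup>2)"
      by (simp add: power2_eq_square ac_simps)
    ultimately have "s * (2 * (cmod c)\<^sup>2) \<le> s * (s * q * (cmod c)\<^sup>2)"
      by linarith
    then have "2 * (cmod c)\<^sup>2 \<le> s * q * (cmod c)\<^sup>2" using s0 by simp
    also have "\<dots> \<le> 1 * (cmod c)\<^sup>2" using sq cpos by (intro mult_right_mono) auto
    finally show False using cpos by simp
  qed
  have wne: "w \<noteq> 0" using fw f0 by auto
  define nn where "nn = (norm w)\<^sup>2"
  have nn0: "nn \<noteq> 0" using wne by (simp add: nn_def)
  show ?thesis
  proof (intro exI allI)
    fix x
    have "f (x - f x *\<^sub>C w) = 0" by (simp add: fdiff sc fw)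
    then have "cinner w (x - f x *\<^sub>C w) = 0" by (rule orth)
    then have "cinner w x = cnj (f x) * cinner w w"
      by (simp add: cinner_diff_right cinner_scaleC_right)
    then have e1: "cinner w x = cnj (f x) * complex_of_real nn"
      by (simp only: cinner_self nn_def)
    have "cinner x w = cnj (cinner w x)" by (simp only: cnj_cinner)
    also have "\<dots> = f x * complex_of_real nn" by (simp only: e1 complex_cnj_mult complex_cnj_cnj complex_cnj_complex_of_real)
    finally have e2: "cinner x w = f x * complex_of_real nn" .
    have "cinner x ((complex_of_real (1 / nn)) *\<^sub>C w) = complex_of_real (1 / nn) * (f x * complex_of_real nn)"
      by (simp only: cinner_scaleC_right e2 complex_cnj_complex_of_real)
    also have "\<dots> = f x" using nn0 by (simp add: field_simps)
    finally show "f x = cinner x ((complex_of_real (1 / nn)) *\<^sub>C w)" by simp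
  qed
qed

lemma adjoint_exists:
  assumes "cbounded (T::'a::chilbert \<Rightarrow> 'b::chilbert)"
  shows "cinner (T x) y = cinner x (cadj T y)"
proof -
  obtain K where lin: "clinear T" and K: "\<And>x. norm (T x) \<le> norm x * K"
    using assms unfolding cbounded_def by blast
  have "\<forall>y. \<exists>z. \<forall>x. cinner (T x) y = cinner x z"
  proof
    fix y
    show "\<exists>z. \<forall>x. cinner (T x) y = cinner x z"
    proof (rule riesz[where K="K * norm y"])
      show "cinner (T (x + x')) y = cinner (T x) y + cinner (T x') y" for x x'
        using lin by (simp add: clinear_def cinner_add_left)
      show "cinner (T (c *\<^sub>C x)) y = c * cinner (T x) y" for c x
        using lin by (simp add: clinear_def cinner_scaleC_left)
      show "cmod (cinner (T x) y) \<le> norm x * (K * norm y)" for x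
      proof -
        have "cmod (cinner (T x) y) \<le> norm (T x) * norm y" by (rule cauchy_schwarz)
        also have "\<dots> \<le> (norm x * K) * norm y" using K by (intro mult_right_mono) auto
        finally show ?thesis by (simp add: mult.assoc)
      qed
    qed
  qed
  then have "\<exists>T'. \<forall>y x. cinner (T x) y = cinner x (T' y)" by (rule choice)
  then have "\<exists>T'. \<forall>x y. cinner (T x) y = cinner x (T' y)" by blast
  then have "\<forall>x y. cinner (T x) y = cinner x (cadj T y)"
    unfolding cadj_def by (rule someI_ex)
  then show ?thesis by blast
qed


lemma cb_add: "cbounded T \<Longrightarrow> T (x + y) = T x + T y"
  by (simp add: cbounded_def clinear_def)

lemma cb_scaleC: "cbounded T \<Longrightarrow> T (c *\<^sub>C x) = c *\<^sub>C T x"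
  by (simp add: cbounded_def clinear_def)

lemma cb_zero: "cbounded (T::'a::cnormed \<Rightarrow> 'b::cnormed) \<Longrightarrow> T 0 = 0"
  using cb_scaleC[of T 0 0] by simp

lemma cb_diff: "cbounded (T::'a::cnormed \<Rightarrow> 'b::cnormed) \<Longrightarrow> T (x - y) = T x - T y"
  using cb_add[of T "x - y" y] by (simp add: eq_diff_eq)

lemma cb_bound: "cbounded T \<Longrightarrow> \<exists>K\<ge>0. \<forall>x. norm (T x) \<le> norm x * K"
proof -
  assume "cbounded T"
  then obtain K where K: "\<And>x. norm (T x) \<le> norm x * K" unfolding cbounded_def by blast
  have "norm (T x) \<le> norm x * max K 0" for x
    using K[of x] mult_left_mono[OF max.cobounded1[of K 0] norm_ge_zero[of x]] by linarith
  then show ?thesis by (intro exI[of _ "max K 0"]) auto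
qed

lemma cb_bounded_linear: "cbounded (T::'a::cnormed \<Rightarrow> 'b::cnormed) \<Longrightarrow> bounded_linear T"
proof -
  assume T: "cbounded T"
  then obtain K where K: "\<And>x. norm (T x) \<le> norm x * K" unfolding cbounded_def by blast
  show ?thesis
  proof (rule bounded_linear_intro[where K=K])
    show "T (x + y) = T x + T y" for x y using T by (rule cb_add)
    show "T (r *\<^sub>R x) = r *\<^sub>R T x" for r x using T by (simp add: scaleR_scaleC cb_scaleC)
    show "norm (T x) \<le> norm x * K" for x by (rule K)
  qed
qed

lemma cbounded_comp: "cbounded A \<Longrightarrow> cbounded B \<Longrightarrow> cbounded (A \<circ> B)"
proof -
  assume A: "cbounded A" and B: "cbounded B"
  obtain KA where KA: "KA \<ge> 0" "\<And>x. norm (A x) \<le> norm x * KA" using cb_bound[OF A] by blast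
  obtain KB where KB: "KB \<ge> 0" "\<And>x. norm (B x) \<le> norm x * KB" using cb_bound[OF B] by blast
  have "norm (A (B x)) \<le> norm x * (KB * KA)" for x
  proof -
    have "norm (A (B x)) \<le> norm (B x) * KA" by (rule KA(2))
    also have "\<dots> \<le> (norm x * KB) * KA" using KB(2)[of x] KA(1) by (rule mult_right_mono)
    finally show ?thesis by (simp add: mult.assoc)
  qed
  moreover have "clinear (A \<circ> B)"
    unfolding clinear_def by (simp add: cb_add[OF A] cb_add[OF B] cb_scaleC[OF A] cb_scaleC[OF B])
  ultimately show ?thesis unfolding cbounded_def by (auto intro!: exI[of _ "KB * KA"])
qed

lemma cbounded_id: "cbounded id"
  by (auto simp: cbounded_def clinear_def intro: exI[of _ 1])

lemma cbounded_funpow: "cbounded (T::'a::cnormed \<Rightarrow> 'a) \<Longrightarrow> cbounded (T ^^ n)"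
proof (induction n)
  case 0
  have "T ^^ 0 = id" by (rule ext) simp
  then show ?case by (simp only: cbounded_id)
next
  case (Suc n)
  then show ?case by (simp only: funpow_Suc_right cbounded_comp)
qed

lemma adj: "cbounded T \<Longrightarrow> cinner (T x) y = cinner x (cadj T y)"
  by (rule adjoint_exists)

lemma adj_left: "cbounded T \<Longrightarrow> cinner (cadj T y) x = cinner y (T x)"
proof -
  assume T: "cbounded T"
  have "cinner (T x) y = cinner x (cadj T y)" using T by (rule adj)
  then have "cnj (cinner (T x) y) = cnj (cinner x (cadj T y))" by simp
  then show ?thesis by (simp only: cnj_cinner)
qed

lemma adj_unique: "(\<And>x y. cinner (T x) y = cinner x (T' y)) \<Longrightarrow> cadj T = T'"
proof -
  assume H: "\<And>x y. cinner (T x) y = cinner x (T' y)"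
  have "\<forall>x y. cinner (T x) y = cinner x (cadj T y)"
    unfolding cadj_def by (rule someI[of "\<lambda>T'. \<forall>x y. cinner (T x) y = cinner x (T' y)" T']) (simp add: H)
  then have "cinner x (cadj T y) = cinner x (T' y)" for x y using H by metis
  then show ?thesis by (intro ext cinner_ext) 
qed

lemma cadj_cbounded: "cbounded (T::'a::chilbert \<Rightarrow> 'b::chilbert) \<Longrightarrow> cbounded (cadj T)"
proof -
  assume T: "cbounded T"
  obtain K where K: "K \<ge> 0" "\<And>x. norm (T x) \<le> norm x * K" using cb_bound[OF T] by blast
  have add: "cadj T (y + z) = cadj T y + cadj T z" for y z
    by (rule cinner_ext) (simp add: adj[OF T, symmetric] cinner_add_right)
  have sc: "cadj T (c *\<^sub>C y) = c *\<^sub>C cadj T y" for c y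
    by (rule cinner_ext) (simp add: adj[OF T, symmetric] cinner_scaleC_right)
  have bd: "norm (cadj T y) \<le> norm y * K" for y
  proof -
    have "(norm (cadj T y))\<^sup>2 = Re (cinner (cadj T y) (cadj T y))" by (rule norm_sq_cinner)
    also have "\<dots> = Re (cinner (T (cadj T y)) y)" by (simp only: adj[OF T])
    also have "\<dots> \<le> cmod (cinner (T (cadj T y)) y)" by (rule complex_Re_le_cmod)
    also have "\<dots> \<le> norm (T (cadj T y)) * norm y" by (rule cauchy_schwarz)
    also have "\<dots> \<le> (norm (cadj T y) * K) * norm y" using K(2) by (rule mult_right_mono) simp
    finally have *: "norm (cadj T y) * norm (cadj T y) \<le> norm (cadj T y) * (norm y * K)"
      by (simp add: power2_eq_square ac_simps)
    show ?thesis
    proof (cases "norm (cadj T y) = 0")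
      case True then show ?thesis using K(1) by simp
    next
      case False then show ?thesis using * by (simp add: mult_le_cancel_left)
    qed
  qed
  show ?thesis unfolding cbounded_def clinear_def using add sc bd by blast
qed

lemma cadj_cadj: "cbounded (T::'a::chilbert \<Rightarrow> 'b::chilbert) \<Longrightarrow> cadj (cadj T) = T"
  by (rule adj_unique) (rule adj_left)

lemma cadj_comp: "cbounded (A::'b::chilbert \<Rightarrow> 'c::chilbert) \<Longrightarrow> cbounded (B::'a::chilbert \<Rightarrow> 'b)
  \<Longrightarrow> cadj (A \<circ> B) = cadj B \<circ> cadj A"
  by (rule adj_unique) (simp add: adj)

lemma isometry_cinner:
  assumes V: "isometry (V::'a::chilbert \<Rightarrow> 'b::chilbert)"
  shows "cinner (V x) (V y) = cinner x y"
proof -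
  have cb: "cbounded V" and n: "\<And>x. norm (V x) = norm x" using V by (auto simp: isometry_def)
  have re: "Re (cinner (V x) (V y)) = Re (cinner x y)" for x y
  proof -
    have "(norm (V x + V y))\<^sup>2 = (norm (x + y))\<^sup>2" using n[of "x + y"] cb by (simp add: cb_add)
    then show ?thesis by (simp add: norm_add_sq n)
  qed
  have im: "Im (cinner (V x) (V y)) = Im (cinner x y)"
  proof -
    have e: "Im (cinner a b) = Re (cinner a (\<i> *\<^sub>C b))" for a b :: "'c::chilbert"
      by (simp add: cinner_scaleC_right)
    show ?thesis using re[of x "\<i> *\<^sub>C y"] by (simp add: e cb_scaleC[OF cb])
  qed
  show ?thesis using re[of x y] im by (rule complex_eqI)
qed

lemma isometry_adj_left: "isometry V \<Longrightarrow> cadj V (V x) = x"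
proof -
  assume V: "isometry V"
  then have cb: "cbounded V" by (simp add: isometry_def)
  show ?thesis
  proof (rule cinner_ext)
    fix y show "cinner y (cadj V (V x)) = cinner y x"
      using adj[OF cb, of y "V x"] isometry_cinner[OF V, of y x] by simp
  qed
qed

lemma isometry_comp: "isometry A \<Longrightarrow> isometry B \<Longrightarrow> isometry (A \<circ> B)"
  by (simp add: isometry_def cbounded_comp)

lemma isometry_id: "isometry id"
  by (simp add: isometry_def cbounded_id)

lemma isometry_funpow: "isometry (T::'a::chilbert \<Rightarrow> 'a) \<Longrightarrow> isometry (T ^^ n)"
proof (induction n)
  case 0
  have "T ^^ 0 = id" by (rule ext) simp
  then show ?case by (simp only: isometry_id)
next
  case (Suc n)
  then show ?case by (simp only: funpow_Suc_right isometry_comp)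
qed

lemma isometry_adj_norm: "isometry (V::'a::chilbert \<Rightarrow> 'b::chilbert) \<Longrightarrow> norm (cadj V y) \<le> norm y"
proof -
  assume V: "isometry V"
  then have cb: "cbounded V" and n: "\<And>x. norm (V x) = norm x" by (auto simp: isometry_def)
  have "(norm (cadj V y))\<^sup>2 = Re (cinner (cadj V y) (cadj V y))" by (rule norm_sq_cinner)
  also have "\<dots> = Re (cinner (V (cadj V y)) y)" by (simp only: adj[OF cb])
  also have "\<dots> \<le> cmod (cinner (V (cadj V y)) y)" by (rule complex_Re_le_cmod)
  also have "\<dots> \<le> norm (V (cadj V y)) * norm y" by (rule cauchy_schwarz)
  finally have *: "norm (cadj V y) * norm (cadj V y) \<le> norm (cadj V y) * norm y"
    by (simp add: power2_eq_square n)
  show ?thesis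
  proof (cases "norm (cadj V y) = 0")
    case True then show ?thesis by simp
  next
    case False then show ?thesis using * by (simp add: mult_le_cancel_left)
  qed
qed

lemma unitary_isometry: "unitary U \<Longrightarrow> isometry U"
proof -
  assume U: "unitary U"
  then have cb: "cbounded U" and l: "cadj U \<circ> U = id" by (auto simp: unitary_def)
  have "(norm (U x))\<^sup>2 = (norm x)\<^sup>2" for x
  proof -
    have "(norm (U x))\<^sup>2 = Re (cinner (U x) (U x))" by (rule norm_sq_cinner)
    also have "\<dots> = Re (cinner x (cadj U (U x)))" by (simp only: adj[OF cb])
    also have "\<dots> = (norm x)\<^sup>2" using l by (simp add: norm_sq_cinner pointfree_idE)
    finally show ?thesis .
  qed
  then have "norm (U x) = norm x" for x by (simp add: power2_eq_iff_nonneg)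
  then show ?thesis using cb by (simp add: isometry_def)
qed

lemma unitary_adj_isometry: "unitary U \<Longrightarrow> isometry (cadj U)"
proof -
  assume U: "unitary U"
  then have cb: "cbounded U" and r: "U \<circ> cadj U = id" by (auto simp: unitary_def)
  have "(norm (cadj U x))\<^sup>2 = (norm x)\<^sup>2" for x
  proof -
    have "(norm (cadj U x))\<^sup>2 = Re (cinner (cadj U x) (cadj U x))" by (rule norm_sq_cinner)
    also have "\<dots> = Re (cinner x (U (cadj U x)))" by (simp only: adj_left[OF cb])
    also have "\<dots> = (norm x)\<^sup>2" using r by (simp add: norm_sq_cinner pointfree_idE)
    finally show ?thesis .
  qed
  then have "norm (cadj U x) = norm x" for x by (simp add: power2_eq_iff_nonneg)
  then show ?thesis using cadj_cbounded[OF cb] by (simp add: isometry_def)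
qed

lemma rproj_projection: "isometry V \<Longrightarrow> is_projection (V \<circ> cadj V)"
proof -
  assume V: "isometry V"
  then have cb: "cbounded V" by (simp add: isometry_def)
  have "cbounded (V \<circ> cadj V)" using cb cadj_cbounded[OF cb] by (rule cbounded_comp)
  moreover have "(V \<circ> cadj V) \<circ> (V \<circ> cadj V) = V \<circ> cadj V"
    by (rule ext) (simp add: isometry_adj_left[OF V])
  moreover have "cadj (V \<circ> cadj V) = V \<circ> cadj V"
    using cadj_comp[OF cb cadj_cbounded[OF cb]] cadj_cadj[OF cb] by simp
  ultimately show ?thesis by (simp add: is_projection_def)
qed

lemma rproj_norm: "isometry V \<Longrightarrow> norm (V (cadj V x)) \<le> norm x"
  using isometry_adj_norm[of V x] by (simp add: isometry_def)

lemma rproj_fix: "isometry V \<Longrightarrow> V (cadj V (V h)) = V h"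
  by (simp add: isometry_adj_left)

lemma rproj_cinner: "isometry V \<Longrightarrow> cinner (V (cadj V x)) x = complex_of_real ((norm (V (cadj V x)))\<^sup>2)"
proof -
  assume V: "isometry V"
  then have cb: "cbounded V" and n: "\<And>x. norm (V x) = norm x" by (auto simp: isometry_def)
  have "cinner (V (cadj V x)) x = cinner (cadj V x) (cadj V x)" by (simp only: adj[OF cb])
  also have "\<dots> = complex_of_real ((norm (V (cadj V x)))\<^sup>2)" by (simp add: cinner_self n)
  finally show ?thesis .
qed

lemma rproj_pyth: "isometry V \<Longrightarrow> (norm (x - V (cadj V x)))\<^sup>2 = (norm x)\<^sup>2 - (norm (V (cadj V x)))\<^sup>2"
proof -
  assume V: "isometry V"
  have "Re (cinner x (V (cadj V x))) = (norm (V (cadj V x)))\<^sup>2"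
    using rproj_cinner[OF V, of x] Re_cinner_commute[of x "V (cadj V x)"] by simp
  then show ?thesis by (simp add: norm_diff_sq)
qed


locale setting =
  fixes \<alpha> :: "'a::cstar_algebra \<Rightarrow> 'a"
    and \<phi> :: "nat \<Rightarrow> 'a \<Rightarrow> 'b::cstar_algebra"
    and \<pi> :: "'a \<Rightarrow> 'h::chilbert \<Rightarrow> 'h"
    and W :: "'h \<Rightarrow> 'h"
    and S :: "nat \<Rightarrow> 'h \<Rightarrow> 'k::chilbert"
    and W_inf :: "'k \<Rightarrow> 'k"
    and \<pi>_inf :: "'b \<Rightarrow> 'k \<Rightarrow> 'k"
    and P :: "int \<Rightarrow> 'k \<Rightarrow> 'k"
  assumes phi_hom: "\<And>n. unital_star_hom (\<phi> n)"
    and phi_compat: "\<And>n. \<phi> (Suc n) \<circ> \<alpha> = \<phi> n"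
    and phi_dense: "closure (\<Union>n. range (\<phi> n)) = UNIV"
    and pi_rep: "representation \<pi>"
    and W_isom: "isometry W"
    and W_proj_comm: "\<And>k. (W ^^ k) \<circ> cadj (W ^^ k) \<in> commutant (range \<pi>)"
    and S_isom: "\<And>n. isometry (S n)"
    and S_compat: "\<And>n. S (Suc n) \<circ> W = S n"
    and S_dense: "closure (\<Union>n. range (S n)) = UNIV"
    and Winf_unitary: "unitary W_inf"
    and Winf_S: "\<And>n. W_inf \<circ> S (Suc n) = S n"
    and pi_inf_rep: "representation \<pi>_inf"
    and pi_inf_S: "\<And>n a. \<pi>_inf (\<phi> n a) \<circ> S n = S n \<circ> \<pi> a"
    and P_def: "\<And>n. P n = upow W_inf n \<circ> (S 0 \<circ> cadj (S 0)) \<circ> cadj (upow W_inf n)"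
begin

abbreviation "U \<equiv> W_inf"
abbreviation "U' \<equiv> cadj W_inf"

lemma Ucb: "cbounded U" using Winf_unitary by (simp add: unitary_def)
lemma Uiso: "isometry U" using Winf_unitary by (rule unitary_isometry)
lemma U'iso: "isometry U'" using Winf_unitary by (rule unitary_adj_isometry)
lemma U'U: "U' (U x) = x" using Winf_unitary by (simp add: unitary_def pointfree_idE)
lemma UU': "U (U' x) = x" using Winf_unitary by (simp add: unitary_def pointfree_idE)

lemma SW: "S (Suc n) (W h) = S n h" using S_compat[of n] by (metis comp_apply)
lemma US: "U (S (Suc n) h) = S n h" using Winf_S[of n] by (metis comp_apply)
lemma U'S: "U' (S n h) = S (Suc n) h" using U'U[of "S (Suc n) h"] by (simp add: US)
lemma US0: "U (S 0 h) = S 0 (W h)" by (simp add: US SW[symmetric, of 0])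

lemma upow_iso: "isometry (upow U n)"
  unfolding upow_def using isometry_funpow[OF Uiso] isometry_funpow[OF U'iso] by simp

lemma upow_cb: "cbounded (upow U n)"
  using upow_iso by (simp add: isometry_def)

lemma upow_neg: "upow U (- int k) = U' ^^ k"
proof (cases k)
  case 0
  have "U ^^ 0 = id" "U' ^^ 0 = id" by (rule ext, simp)+
  then show ?thesis using 0 by (simp add: upow_def)
next
  case (Suc m)
  then have "\<not> 0 \<le> - int k" by simp
  then have "upow U (- int k) = U' ^^ nat (- (- int k))" unfolding upow_def by (rule if_not_P)
  then show ?thesis by simp
qed

lemma upow_succ: "upow U (n + 1) x = upow U n (U x)"
proof (cases "n \<ge> 0")
  case True
  then have "nat (n + 1) = Suc (nat n)" by simp
  then show ?thesis using True by (simp add: upow_def funpow_swap1)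
next
  case False
  define k where "k = nat (- (n + 1))"
  have n: "n = - int (Suc k)" using False by (simp add: k_def)
  have n1: "n + 1 = - int k" using False by (simp add: k_def)
  show ?thesis unfolding n1 upow_neg unfolding n upow_neg
    by (simp add: funpow_swap1 U'U)
qed

definition V :: "int \<Rightarrow> 'h \<Rightarrow> 'k" where "V n = upow U n \<circ> S 0"

lemma V_iso: "isometry (V n)"
  unfolding V_def using upow_iso S_isom by (rule isometry_comp)

lemma P_V: "P n = V n \<circ> cadj (V n)"
proof -
  have cbS: "cbounded (S 0)" using S_isom by (simp add: isometry_def)
  have "cadj (V n) = cadj (S 0) \<circ> cadj (upow U n)"
    unfolding V_def by (rule cadj_comp[OF upow_cb cbS])
  then show ?thesis by (simp add: P_def V_def o_assoc)
qed

lemma V_step: "V (n + 1) = V n \<circ> W"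
  by (rule ext) (simp add: V_def upow_succ US0)

lemma V_nonneg: "V (int j) = S 0 \<circ> W ^^ j"
proof (induction j)
  case 0
  have "U ^^ 0 = id" "W ^^ 0 = id" by (rule ext, simp)+
  then show ?case by (simp add: V_def upow_def)
next
  case (Suc j)
  have "V (int (Suc j)) = V (int j + 1)" by (simp only: of_nat_Suc add.commute)
  also have "\<dots> = V (int j) \<circ> W" by (rule V_step)
  finally show ?case using Suc by (simp add: funpow_swap1 o_assoc)
qed

lemma V_neg: "V (- int k) = S k"
proof (induction k)
  case 0
  have "U ^^ 0 = id" by (rule ext, simp)
  then show ?case by (simp add: V_def upow_def)
next
  case (Suc k)
  have "V (- int (Suc k)) h = S (Suc k) h" for h
  proof -
    have "V (- int (Suc k)) h = (U' ^^ Suc k) (S 0 h)" by (simp only: V_def comp_apply upow_neg)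
    also have "\<dots> = U' ((U' ^^ k) (S 0 h))" by simp
    also have "(U' ^^ k) (S 0 h) = S k h" using Suc by (metis V_def comp_apply upow_neg)
    finally show ?thesis by (simp add: U'S)
  qed
  then show ?case by (rule ext)
qed

lemma V_form: "\<exists>k j. V n = S k \<circ> W ^^ j"
proof (cases "n \<ge> 0")
  case True
  then have "V n = S 0 \<circ> W ^^ nat n" using V_nonneg[of "nat n"] by simp
  then show ?thesis by blast
next
  case False
  then have "V n = S (nat (- n)) \<circ> W ^^ 0" using V_neg[of "nat (- n)"]
    by (simp add: fun_eq_iff)
  then show ?thesis by blast
qed


lemma phi_pt: "\<phi> (Suc n) (\<alpha> x) = \<phi> n x"
  using fun_cong[OF phi_compat[of n], of x] by simp

lemma phi_iter: "\<phi> (m + i) ((\<alpha> ^^ i) a) = \<phi> m a"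
proof (induction i)
  case 0 then show ?case by simp
next
  case (Suc i)
  have "\<phi> (m + Suc i) ((\<alpha> ^^ Suc i) a) = \<phi> (Suc (m + i)) (\<alpha> ((\<alpha> ^^ i) a))" by simp
  also have "\<dots> = \<phi> (m + i) ((\<alpha> ^^ i) a)" by (rule phi_pt)
  finally show ?case using Suc by simp
qed

lemma S_iter: "S (k + i) ((W ^^ i) h) = S k h"
proof (induction i)
  case 0 then show ?case by simp
next
  case (Suc i)
  have "S (k + Suc i) ((W ^^ Suc i) h) = S (Suc (k + i)) (W ((W ^^ i) h))" by simp
  also have "\<dots> = S (k + i) ((W ^^ i) h)" by (rule SW)
  finally show ?case using Suc by simp
qed

lemma W_comm: "(W ^^ J) (cadj (W ^^ J) (\<pi> a ((W ^^ J) h))) = \<pi> a ((W ^^ J) h)"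
proof -
  have "((W ^^ J) \<circ> cadj (W ^^ J)) \<circ> \<pi> a = \<pi> a \<circ> ((W ^^ J) \<circ> cadj (W ^^ J))"
    using W_proj_comm[of J] unfolding commutant_def by blast
  from fun_cong[OF this, of "(W ^^ J) h"]
  show ?thesis by (simp add: isometry_adj_left[OF isometry_funpow[OF W_isom]])
qed

lemma pi_inf_pt: "\<pi>_inf (\<phi> n a) (S n h) = S n (\<pi> a h)"
  using fun_cong[OF pi_inf_S[of n a], of h] by simp

lemma inv_S: "\<exists>g. \<pi>_inf (\<phi> m a) (S k ((W ^^ j) h)) = S k ((W ^^ j) g)"
proof -
  define a' where "a' = (\<alpha> ^^ k) a"
  define J where "J = m + j"
  have 1: "\<phi> m a = \<phi> (k + m) a'" using phi_iter[of m k a] by (simp add: a'_def add.commute)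
  have WJ: "(W ^^ J) y = (W ^^ m) ((W ^^ j) y)" for y by (simp add: J_def funpow_add)
  have 2: "S k ((W ^^ j) y) = S (k + m) ((W ^^ J) y)" for y
    using S_iter[of k m "(W ^^ j) y"] by (simp add: WJ)
  define g where "g = cadj (W ^^ J) (\<pi> a' ((W ^^ J) h))"
  have "\<pi>_inf (\<phi> m a) (S k ((W ^^ j) h)) = \<pi>_inf (\<phi> (k + m) a') (S (k + m) ((W ^^ J) h))"
    by (simp only: 1 2)
  also have "\<dots> = S (k + m) (\<pi> a' ((W ^^ J) h))" by (rule pi_inf_pt)
  also have "\<dots> = S (k + m) ((W ^^ J) g)" unfolding g_def by (simp only: W_comm)
  also have "\<dots> = S k ((W ^^ j) g)" by (simp only: 2)
  finally show ?thesis by blast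
qed

lemma inv_V: "\<exists>g. \<pi>_inf (\<phi> m a) (V n h) = V n g"
proof -
  obtain k j where "V n = S k \<circ> W ^^ j" using V_form by blast
  then show ?thesis using inv_S[of m a k j h] by simp
qed

lemma pinf_cb: "cbounded (\<pi>_inf b)" using pi_inf_rep by (simp add: representation_def)
lemma pinf_adj: "cadj (\<pi>_inf b) = \<pi>_inf (invol b)" using pi_inf_rep by (simp add: representation_def)
lemma phi_invol: "invol (\<phi> m a) = \<phi> m (invol a)" using phi_hom[of m] by (simp add: unital_star_hom_def)

lemma P_proj: "is_projection (P n)" unfolding P_V by (rule rproj_projection[OF V_iso])
lemma P_cb: "cbounded (P n)" using P_proj by (simp add: is_projection_def)
lemma P_sa: "cinner (P n x) y = cinner x (P n y)"
proof -
  have "cadj (P n) = P n" using P_proj by (simp add: is_projection_def)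
  then show ?thesis using adj[OF P_cb, of n x y] by simp
qed

lemma P_inv: "P n (\<pi>_inf (\<phi> m a) (P n x)) = \<pi>_inf (\<phi> m a) (P n x)"
proof -
  obtain g where g: "\<pi>_inf (\<phi> m a) (V n (cadj (V n) x)) = V n g" using inv_V by blast
  show ?thesis unfolding P_V comp_apply g by (rule rproj_fix[OF V_iso])
qed

lemma P_comm_phi: "P n (\<pi>_inf (\<phi> m a) x) = \<pi>_inf (\<phi> m a) (P n x)"
proof (rule cinner_ext_left)
  fix y
  let ?T = "\<pi>_inf (\<phi> m a)" and ?T2 = "\<pi>_inf (\<phi> m (invol a))"
  have T: "cinner (?T z) w = cinner z (?T2 w)" for z w
    using adj[OF pinf_cb, of "\<phi> m a" z w] by (simp add: pinf_adj phi_invol)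
  have "cinner (P n (?T x)) y = cinner (?T x) (P n y)" by (rule P_sa)
  also have "\<dots> = cinner x (?T2 (P n y))" by (rule T)
  also have "\<dots> = cinner x (P n (?T2 (P n y)))" by (simp only: P_inv)
  also have "\<dots> = cinner (P n x) (?T2 (P n y))" by (simp only: P_sa)
  also have "\<dots> = cinner (?T (P n x)) (P n y)" by (simp only: T)
  also have "\<dots> = cinner (P n (?T (P n x))) y" by (simp only: P_sa)
  also have "\<dots> = cinner (?T (P n x)) y" by (simp only: P_inv)
  finally show "cinner (P n (?T x)) y = cinner (?T (P n x)) y" .
qed

lemma pinf_diff: "\<pi>_inf (c - d) v = \<pi>_inf c v - \<pi>_inf d v"
proof -
  have "\<pi>_inf c = (\<lambda>v. \<pi>_inf (c - d) v + \<pi>_inf d v)"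
    using pi_inf_rep unfolding representation_def by (metis diff_add_cancel)
  then show ?thesis by (metis add_diff_cancel_right')
qed

lemma pinf_norm: "norm (\<pi>_inf c v) \<le> norm c * norm v"
  using pi_inf_rep by (simp add: representation_def)

lemma pinf_conv:
  assumes "bs \<longlonglongrightarrow> b"
  shows "(\<lambda>k. \<pi>_inf (bs k) v) \<longlonglongrightarrow> \<pi>_inf b v"
proof (rule LIM_zero_cancel)
  have "(\<lambda>k. bs k - b) \<longlonglongrightarrow> 0" using assms by (rule LIM_zero)
  then have "(\<lambda>k. norm (bs k - b)) \<longlonglongrightarrow> 0" by (rule tendsto_norm_zero)
  then have g: "(\<lambda>k. norm (bs k - b) * norm v) \<longlonglongrightarrow> 0 * norm v" by (intro tendsto_mult tendsto_const)
  show "(\<lambda>k. \<pi>_inf (bs k) v - \<pi>_inf b v) \<longlonglongrightarrow> 0"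
  proof (rule Lim_null_comparison)
    show "\<forall>\<^sub>F k in sequentially. norm (\<pi>_inf (bs k) v - \<pi>_inf b v) \<le> norm (bs k - b) * norm v"
      by (simp add: pinf_diff[symmetric] pinf_norm)
    show "(\<lambda>k. norm (bs k - b) * norm v) \<longlonglongrightarrow> 0" using g by simp
  qed
qed

lemma P_comm: "P n (\<pi>_inf b x) = \<pi>_inf b (P n x)"
proof -
  have "b \<in> closure (\<Union>n. range (\<phi> n))" using phi_dense by simp
  then obtain bs where bs: "\<And>k. bs k \<in> (\<Union>n. range (\<phi> n))" "bs \<longlonglongrightarrow> b"
    unfolding closure_sequential by blast
  have eq: "P n (\<pi>_inf (bs k) x) = \<pi>_inf (bs k) (P n x)" for k
    using bs(1)[of k] P_comm_phi by auto
  have "(\<lambda>k. P n (\<pi>_inf (bs k) x)) \<longlonglongrightarrow> P n (\<pi>_inf b x)"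
    by (rule bounded_linear.tendsto[OF cb_bounded_linear[OF P_cb]] pinf_conv[OF bs(2)])+
  moreover have "(\<lambda>k. P n (\<pi>_inf (bs k) x)) \<longlonglongrightarrow> \<pi>_inf b (P n x)"
    unfolding eq by (rule pinf_conv[OF bs(2)])
  ultimately show ?thesis by (rule LIMSEQ_unique)
qed

lemma P_commutant: "P n \<in> commutant (range \<pi>_inf)"
  unfolding commutant_def using P_cb by (auto simp: fun_eq_iff P_comm)


lemma W_cb: "cbounded W" using W_isom by (simp add: isometry_def)

lemma P_step: "P (n + 1) x = P (n + 1) (P n x)"
proof -
  have cV: "cbounded (V n)" using V_iso by (simp add: isometry_def)
  have a: "cadj (V (n + 1)) = cadj W \<circ> cadj (V n)"
    unfolding V_step by (rule cadj_comp[OF cV W_cb])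
  show ?thesis unfolding P_V a by (simp add: isometry_adj_left[OF V_iso])
qed

lemma P_norm: "norm (P n x) \<le> norm x"
  unfolding P_V comp_apply by (rule rproj_norm[OF V_iso])

lemma P_mono_norm: "norm (P (n + 1) x) \<le> norm (P n x)"
  using P_norm[of "n + 1" "P n x"] P_step[of n x] by simp

lemma P_cinner: "cinner (P n x) x = complex_of_real ((norm (P n x))\<^sup>2)"
  unfolding P_V comp_apply by (rule rproj_cinner[OF V_iso])

lemma P_le: "op_le (P (n + 1)) (P n)"
  unfolding op_le_def P_cinner using P_mono_norm by (simp add: power_mono)

lemma P_idem: "P n (P n x) = P n x"
  using P_proj unfolding is_projection_def by (metis comp_apply)

lemma P_iter: "P (n + int i) x = P (n + int i) (P n x)"
proof (induction i)
  case 0 then show ?case by (simp add: P_idem)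
next
  case (Suc i)
  have e: "n + int (Suc i) = (n + int i) + 1" by simp
  have "P (n + int (Suc i)) x = P ((n + int i) + 1) (P (n + int i) x)" unfolding e by (rule P_step)
  also have "\<dots> = P ((n + int i) + 1) (P (n + int i) (P n x))" using Suc by simp
  also have "\<dots> = P ((n + int i) + 1) (P n x)" by (rule P_step[symmetric])
  finally show ?case unfolding e .
qed

lemma P_diff_sq:
  assumes "k \<le> l"
  shows "(norm (P k x - P l x))\<^sup>2 = (norm (P k x))\<^sup>2 - (norm (P l x))\<^sup>2"
proof -
  have l: "l = k + int (nat (l - k))" using assms by simp
  have Pl: "P l x = P l (P k x)" by (subst (1 2) l) (rule P_iter)
  show ?thesis unfolding Pl unfolding P_V comp_apply by (rule rproj_pyth[OF V_iso])
qed

lemma P_conv_nat: "convergent (\<lambda>k. P (int k) x)"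
proof -
  define c where "c k = (norm (P (int k) x))\<^sup>2" for k
  have "decseq c"
  proof (rule decseq_SucI)
    fix k
    have "norm (P (int k + 1) x) \<le> norm (P (int k) x)" by (rule P_mono_norm)
    then show "c (Suc k) \<le> c k" unfolding c_def by (simp add: power_mono add.commute)
  qed
  moreover have "\<forall>i. 0 \<le> c i" by (simp add: c_def)
  ultimately obtain L where "c \<longlonglongrightarrow> L" by (rule decseq_convergent)
  then have Cc: "Cauchy c" by (rule LIMSEQ_imp_Cauchy)
  have "Cauchy (\<lambda>k. P (int k) x)"
  proof (rule metric_CauchyI)
    fix e :: real assume e: "0 < e"
    then have "0 < e\<^sup>2" by simp
    then obtain M where M: "\<And>m n. m \<ge> M \<Longrightarrow> n \<ge> M \<Longrightarrow> dist (c m) (c n) < e\<^sup>2"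
      using metric_CauchyD[OF Cc] by blast
    have "dist (P (int m) x) (P (int n) x) < e" if "m \<ge> M" "n \<ge> M" for m n
    proof -
      have "(norm (P (int m) x - P (int n) x))\<^sup>2 < e\<^sup>2"
      proof (cases "m \<le> n")
        case True
        then have "(norm (P (int m) x - P (int n) x))\<^sup>2 = c m - c n"
          unfolding c_def by (intro P_diff_sq) simp
        then show ?thesis using M[OF that] by (simp add: dist_real_def)
      next
        case False
        then have "(norm (P (int n) x - P (int m) x))\<^sup>2 = c n - c m"
          unfolding c_def by (intro P_diff_sq) simp
        then show ?thesis using M[OF that] by (simp add: dist_real_def norm_minus_commute)
      qed
      then have "norm (P (int m) x - P (int n) x) < e"
        by (rule power2_less_imp_less[OF _ less_imp_le[OF e]])
      then show ?thesis by (simp add: dist_norm)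
    qed
    then show "\<exists>M. \<forall>m\<ge>M. \<forall>n\<ge>M. dist (P (int m) x) (P (int n) x) < e" by blast
  qed
  then show ?thesis by (rule Cauchy_convergent)
qed

definition Pinf :: "'k \<Rightarrow> 'k" where "Pinf x = lim (\<lambda>k. P (int k) x)"

lemma Pinf_nat: "(\<lambda>k. P (int k) x) \<longlonglongrightarrow> Pinf x"
  unfolding Pinf_def using P_conv_nat by (simp add: convergent_LIMSEQ_iff)

lemma Pinf_top: "((\<lambda>n. P n x) \<longlongrightarrow> Pinf x) at_top"
proof (rule tendstoI)
  fix e :: real assume e: "0 < e"
  then have "eventually (\<lambda>k. dist (P (int k) x) (Pinf x) < e) sequentially"
    using Pinf_nat by (rule tendstoD[rotated])
  then obtain M where M: "\<And>k. k \<ge> M \<Longrightarrow> dist (P (int k) x) (Pinf x) < e"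
    unfolding eventually_sequentially by blast
  have "dist (P n x) (Pinf x) < e" if "n \<ge> int M" for n
  proof -
    have "n = int (nat n)" "nat n \<ge> M" using that by auto
    then show ?thesis using M by metis
  qed
  then show "eventually (\<lambda>n. dist (P n x) (Pinf x) < e) at_top"
    unfolding eventually_at_top_linorder by blast
qed

lemma Pinf_commutant: "Pinf \<in> commutant (range \<pi>_inf)"
proof -
  have add: "Pinf (x + y) = Pinf x + Pinf y" for x y
  proof -
    have "(\<lambda>k. P (int k) x + P (int k) y) \<longlonglongrightarrow> Pinf x + Pinf y"
      by (intro tendsto_add Pinf_nat)
    moreover have "(\<lambda>k. P (int k) x + P (int k) y) \<longlonglongrightarrow> Pinf (x + y)"
      using Pinf_nat[of "x + y"] by (simp add: cb_add[OF P_cb])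
    ultimately show ?thesis by (rule LIMSEQ_unique[rotated])
  qed
  have sc: "Pinf (c *\<^sub>C x) = c *\<^sub>C Pinf x" for c x
  proof -
    have "(\<lambda>k. c *\<^sub>C P (int k) x) \<longlonglongrightarrow> c *\<^sub>C Pinf x"
      by (rule bounded_linear.tendsto[OF bounded_linear_scaleC Pinf_nat])
    moreover have "(\<lambda>k. c *\<^sub>C P (int k) x) \<longlonglongrightarrow> Pinf (c *\<^sub>C x)"
      using Pinf_nat[of "c *\<^sub>C x"] by (simp add: cb_scaleC[OF P_cb])
    ultimately show ?thesis by (rule LIMSEQ_unique[rotated])
  qed
  have bd: "norm (Pinf x) \<le> norm x * 1" for x
  proof -
    have "(\<lambda>k. norm (P (int k) x)) \<longlonglongrightarrow> norm (Pinf x)" by (intro tendsto_norm Pinf_nat)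
    moreover have "eventually (\<lambda>k. norm (P (int k) x) \<le> norm x) sequentially"
      by (simp add: P_norm)
    ultimately have "norm (Pinf x) \<le> norm x" by (rule tendsto_upperbound) simp
    then show ?thesis by simp
  qed
  have cb: "cbounded Pinf" unfolding cbounded_def clinear_def using add sc bd by blast
  have comm: "Pinf (\<pi>_inf b x) = \<pi>_inf b (Pinf x)" for b x
  proof -
    have "(\<lambda>k. \<pi>_inf b (P (int k) x)) \<longlonglongrightarrow> \<pi>_inf b (Pinf x)"
      by (rule bounded_linear.tendsto[OF cb_bounded_linear[OF pinf_cb] Pinf_nat])
    moreover have "(\<lambda>k. \<pi>_inf b (P (int k) x)) \<longlonglongrightarrow> Pinf (\<pi>_inf b x)"
      using Pinf_nat[of "\<pi>_inf b x"] by (simp add: P_comm)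
    ultimately show ?thesis by (rule LIMSEQ_unique[rotated])
  qed
  show ?thesis unfolding commutant_def using cb comm by (auto simp: fun_eq_iff)
qed

lemma P_bot: "((\<lambda>n. P n x) \<longlongrightarrow> x) at_bot"
proof (rule tendstoI)
  fix e :: real assume e: "0 < e"
  have "x \<in> closure (\<Union>n. range (S n))" using S_dense by simp
  then obtain y where y: "y \<in> (\<Union>n. range (S n))" "dist y x < e / 2"
    unfolding closure_approachable using e by (meson half_gt_zero)
  then obtain k h where yk: "y = S k h" by blast
  have "dist (P n x) x < e" if n: "n \<le> - int k" for n
  proof -
    define j where "j = nat (- n)"
    have nj: "n = - int j" "k \<le> j" using n by (auto simp: j_def)
    have yj: "y = V n ((W ^^ (j - k)) h)"
      using S_iter[of k "j - k" h] nj by (simp add: yk V_neg)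
    have Py: "P n y = y" unfolding P_V comp_apply yj by (rule rproj_fix[OF V_iso])
    have "P n x - x = P n (x - y) + (y - x)" by (simp add: cb_diff[OF P_cb] Py)
    then have "norm (P n x - x) \<le> norm (P n (x - y)) + norm (y - x)" by (metis norm_triangle_ineq)
    also have "\<dots> \<le> norm (x - y) + norm (y - x)" using P_norm by simp
    also have "\<dots> < e" using y(2) by (simp add: dist_norm norm_minus_commute)
    finally show ?thesis by (simp add: dist_norm)
  qed
  then show "eventually (\<lambda>n. dist (P n x) x < e) at_bot"
    unfolding eventually_at_bot_linorder by blast
qed

lemma main:
  "(\<forall>n. is_projection (P n)) \<and> (\<forall>n. op_le (P (n + 1)) (P n))
    \<and> (\<exists>P_inf. (\<forall>x. ((\<lambda>n. P n x) \<longlongrightarrow> P_inf x) at_top)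
            \<and> P_inf \<in> commutant (range \<pi>_inf))
    \<and> (\<forall>x. ((\<lambda>n. P n x) \<longlongrightarrow> x) at_bot)
    \<and> (\<forall>n. P n \<in> commutant (range \<pi>_inf))"
  using P_proj P_le Pinf_top Pinf_commutant P_bot P_commutant by blast

end

theorem proposition2p5:
  fixes \<alpha> :: "'a::cstar_algebra \<Rightarrow> 'a"
    and \<phi> :: "nat \<Rightarrow> 'a \<Rightarrow> 'b::cstar_algebra"
    and \<pi> :: "'a \<Rightarrow> 'h::chilbert \<Rightarrow> 'h"
    and W :: "'h \<Rightarrow> 'h"
    and S :: "nat \<Rightarrow> 'h \<Rightarrow> 'k::chilbert"
    and W_inf :: "'k \<Rightarrow> 'k"
    and \<pi>_inf :: "'b \<Rightarrow> 'k \<Rightarrow> 'k"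
    and P :: "int \<Rightarrow> 'k \<Rightarrow> 'k"
  assumes alpha_hom: "unital_star_hom \<alpha>" and alpha_inj: "inj \<alpha>"
    and phi_hom: "\<And>n. unital_star_hom (\<phi> n)"
    and phi_isom: "\<And>n a. norm (\<phi> n a) = norm a"
    and phi_compat: "\<And>n. \<phi> (Suc n) \<circ> \<alpha> = \<phi> n"
    and phi_dense: "closure (\<Union>n. range (\<phi> n)) = UNIV"
    and pi_rep: "representation \<pi>"
    and W_isom: "isometry W"
    and covariant: "\<And>a. \<pi> (\<alpha> a) \<circ> W = W \<circ> \<pi> a"
    and W_proj_comm: "\<And>k. (W ^^ k) \<circ> cadj (W ^^ k) \<in> commutant (range \<pi>)"
    and S_isom: "\<And>n. isometry (S n)"
    and S_compat: "\<And>n. S (Suc n) \<circ> W = S n"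
    and S_dense: "closure (\<Union>n. range (S n)) = UNIV"
    and Winf_unitary: "unitary W_inf"
    and Winf_S: "\<And>n. W_inf \<circ> S (Suc n) = S n"
    and pi_inf_rep: "representation \<pi>_inf"
    and pi_inf_S: "\<And>n a. \<pi>_inf (\<phi> n a) \<circ> S n = S n \<circ> \<pi> a"
    and P_def: "\<And>n. P n = upow W_inf n \<circ> (S 0 \<circ> cadj (S 0)) \<circ> cadj (upow W_inf n)"
  shows "(\<forall>n. is_projection (P n)) \<and> (\<forall>n. op_le (P (n + 1)) (P n))
    \<and> (\<exists>P_inf. (\<forall>x. ((\<lambda>n. P n x) \<longlongrightarrow> P_inf x) at_top)
            \<and> P_inf \<in> commutant (range \<pi>_inf))
    \<and> (\<forall>x. ((\<lambda>n. P n x) \<longlongrightarrow> x) at_bot)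
    \<and> (\<forall>n. P n \<in> commutant (range \<pi>_inf))"
proof -
  interpret setting \<alpha> \<phi> \<pi> W S W_inf \<pi>_inf P
    by unfold_locales (fact assms)+
  show ?thesis by (rule main)
qed

end
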